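(* In the stochastic epidemic model described in the context, for every $k\ge1$, $$I(k)=\Phi_I(k,0)I_0-\sum_{i=0}^{k-1}\Phi_I(k,i+1)\,v(i)\,u(i),$$ and the expected infected cases satisfy $$\mathbb{E}[I(k)]\le (1+\overline{\delta}-\overline{d_I})^{k}I_0-v_{\min}\sum_{i=0}^{k-1}(1+\overline{\delta}-\overline{d_I})^{k-i-1}\,\mathbb{E}[u(i)].$$
   Context: Time is indexed by days $k=0,1,2,\dots$. Let $(\delta(k))_{k\ge0}$, $(d_I(k))_{k\ge0}$, $(v(k))_{k\ge0}$ be three mutually independent sequences of random variables, each sequence i.i.d. in $k$, with $0\le \delta(k)\le \delta_{\max}$, $0\le d_I(k)\le d_{\max}$ where $d_{\max}<1$, and $0<v_{\min}\le v(k)\le v_{\max}\le 1$. Write $\overline{\delta}=\mathbb{E}[\delta(k)]$, $\overline{d_I}=\mathbb{E}[d_I(k)]$. The control $u(k)\ge0$ is causal: $u(k)$ is a function only of the information (states) available up to day $k$. The cases evolve by $S(k+1)=S(k)-\delta(k)I(k)$, $I(k+1)=(1+\delta(k))I(k)-v(k)u(k)-d_I(k)I(k)$, $R(k+1)=R(k)+v(k)u(k)$, $D(k+1)=D(k)+d_I(k)I(k)$, with $S(0)=S_0$, $I(0)=I_0>0$, $R(0)=D(0)=0$, $I_0\delta_{\max}<S_0$. It is assumed that the policy $u$ keeps $S(k),I(k),R(k),D(k)$ nonnegative for all $k$ with probability one. The state transition function is $\Phi_I(k,k_0)=\prod_{i=k_0}^{k-1}(1+\delta(i)-d_I(i))$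 for integers $k\ge k_0\ge0$ (empty product $=1$). *)

theory Defs
  imports "HOL-Probability.Probability"
begin

definition PhiI :: "(nat \<Rightarrow> 'a \<Rightarrow> real) \<Rightarrow> (nat \<Rightarrow> 'a \<Rightarrow> real) \<Rightarrow> nat \<Rightarrow> nat \<Rightarrow> 'a \<Rightarrow> real" where
  "PhiI \<delta> dI k k0 w = (\<Prod>i\<in>{k0..<k}. (1 + \<delta> i w - dI i w))"

definition info_upto :: "'a measure \<Rightarrow> (nat \<Rightarrow> 'a \<Rightarrow> real \<times> real \<times> real \<times> real) \<Rightarrow> nat \<Rightarrow> 'a measure" where
  "info_upto M X k = sigma (space M)
     (\<Union>j\<in>{..k}. {X j -` A \<inter> space M | A. A \<in> sets borel})"

definition noise :: "(nat \<Rightarrow> 'a \<Rightarrow> real) \<Rightarrow> (nat \<Rightarrow> 'a \<Rightarrow> real) \<Rightarrow> (nat \<Rightarrow> 'a \<Rightarrow> real)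
    \<Rightarrow> nat + nat + nat \<Rightarrow> 'a \<Rightarrow> real" where
  "noise \<delta> dI v i = (case i of Inl k \<Rightarrow> \<delta> k | Inr (Inl k) \<Rightarrow> dI k | Inr (Inr k) \<Rightarrow> v k)"

end

theory Submission
  imports Defs
begin


lemma indep_group:
  fixes X :: "'i \<Rightarrow> 'a \<Rightarrow> real"
  assumes P: "prob_space M"
    and ind: "prob_space.indep_vars M (\<lambda>_. borel) X UNIV"
    and j: "j \<notin> J"
    and Y: "Y \<in> borel_measurable (sigma (space M) (\<Union>i\<in>J. {X i -` A \<inter> space M | A. A \<in> sets borel}))"
  shows "prob_space.indep_var M borel (X j) borel Y"
proof -
  interpret prob_space M by (rule P)
  let ?E = "\<lambda>i. {X i -` A \<inter> space M | A. A \<in> sets borel}"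
  have rv: "\<And>i. X i \<in> borel_measurable M" using ind by (auto simp: indep_vars_def2)
  have ie: "indep_sets ?E UNIV" using ind by (simp add: indep_vars_def2)
  let ?I = "\<lambda>b. if b then {j} else J"
  have "indep_sets (\<lambda>b. sigma_sets (space M) (\<Union>i\<in>?I b. ?E i)) UNIV"
  proof (rule indep_sets_collect_sigma)
    show "indep_sets ?E (\<Union>b\<in>UNIV. ?I b)" by (rule indep_sets_mono_index[OF _ ie]) auto
    show "Int_stable (?E i)" for i
      unfolding Int_stable_def
      apply safe
      subgoal for a b A B by (rule_tac x="A \<inter> B" in exI) auto
      done
    show "disjoint_family_on ?I UNIV" using j by (auto simp: disjoint_family_on_def)
  qed
  have gsub: "(\<Union>i\<in>J. ?E i) \<subseteq> Pow (space M)" by auto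
  have Ysets: "Y -` A \<inter> space M \<in> sigma_sets (space M) (\<Union>i\<in>J. ?E i)" if "A \<in> sets borel" for A
    using measurable_sets[OF Y that] gsub by (simp add: sets_measure_of space_measure_of_conv)
  have Ym: "Y \<in> borel_measurable M"
  proof -
    have "sets (sigma (space M) (\<Union>i\<in>J. ?E i)) \<subseteq> sets M"
      using gsub rv by (auto simp: sets_measure_of intro!: sets.sigma_sets_subset measurable_sets)
    then show ?thesis
      using measurable_mono[of borel borel "sigma (space M) (\<Union>i\<in>J. ?E i)" M] Y
      by (auto simp: space_measure_of_conv)
  qed
  show ?thesis
    unfolding indep_var_def indep_vars_def2
  proof
    show "\<forall>b\<in>UNIV. random_variable (case_bool borel borel b) (case_bool (X j) Y b)"
      using rv Ym by (auto split: bool.split)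
    show "indep_sets (\<lambda>b. {case_bool (X j) Y b -` A \<inter> space M |A. A \<in> sets (case_bool borel borel b)}) UNIV"
      apply (rule indep_sets_mono_sets[OF \<open>indep_sets (\<lambda>b. sigma_sets (space M) (\<Union>i\<in>?I b. ?E i)) UNIV\<close>])
      subgoal for b
        using Ysets by (cases b) auto
      done
  qed
qed



definition ntime :: "nat + nat + nat \<Rightarrow> nat" where
  "ntime i = (case i of Inl k \<Rightarrow> k | Inr (Inl k) \<Rightarrow> k | Inr (Inr k) \<Rightarrow> k)"

definition GG :: "'a measure \<Rightarrow> (nat + nat + nat \<Rightarrow> 'a \<Rightarrow> real) \<Rightarrow> nat \<Rightarrow> 'a measure" where
  "GG M X k = sigma (space M) (\<Union>i\<in>{i. ntime i < k}. {X i -` A \<inter> space M | A. A \<in> sets borel})"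

lemma space_GG[simp]: "space (GG M X k) = space M"
  unfolding GG_def by (simp add: space_measure_of_conv)

lemma sets_GG: "sets (GG M X k) = sigma_sets (space M) (\<Union>i\<in>{i. ntime i < k}. {X i -` A \<inter> space M | A. A \<in> sets borel})"
  unfolding GG_def by (rule sets_measure_of) auto

lemma GG_mono: "k \<le> k' \<Longrightarrow> f \<in> borel_measurable (GG M X k) \<Longrightarrow> f \<in> borel_measurable (GG M X k')"
  unfolding GG_def
  apply (rule subsetD[OF measurable_mono1])
    apply auto
  apply (rule_tac x=i in exI) apply auto
  done

lemma GG_noise: "ntime i < k \<Longrightarrow> X i \<in> borel_measurable (GG M X k)"
  unfolding measurable_def
  by (auto simp: sets_GG intro!: sigma_sets.Basic)

lemma GG_sub_M: assumes "\<And>i. X i \<in> borel_measurable M" "f \<in> borel_measurable (GG M X k)"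
  shows "f \<in> borel_measurable M"
proof -
  have "sets (GG M X k) \<subseteq> sets M"
    unfolding sets_GG using assms(1)
    by (intro sets.sigma_sets_subset) (auto intro!: measurable_sets)
  then show ?thesis using measurable_mono[of borel borel "GG M X k" M] assms(2) by auto
qed

lemma info_sub_GG:
  fixes Z :: "nat \<Rightarrow> 'a \<Rightarrow> real \<times> real \<times> real \<times> real"
  assumes "\<And>j. j \<le> k \<Longrightarrow> Z j \<in> borel_measurable (GG M X k)"
    and "f \<in> borel_measurable (info_upto M Z k)"
  shows "f \<in> borel_measurable (GG M X k)"
proof -
  have gen: "(\<Union>j\<in>{..k}. {Z j -` A \<inter> space M | A. A \<in> sets borel}) \<subseteq> sets (GG M X k)"
  proof (intro subsetI)
    fix x assume "x \<in> (\<Union>j\<in>{..k}. {Z j -` A \<inter> space M | A. A \<in> sets borel})"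
    then obtain j A where "j \<le> k" "A \<in> sets borel" "x = Z j -` A \<inter> space M" by auto
    then show "x \<in> sets (GG M X k)" using measurable_sets[OF assms(1)[of j], of A] by simp
  qed
  have sp: "space (info_upto M Z k) = space M"
    unfolding info_upto_def by (simp add: space_measure_of_conv)
  have "sets (info_upto M Z k) = sigma_sets (space M) (\<Union>j\<in>{..k}. {Z j -` A \<inter> space M | A. A \<in> sets borel})"
    unfolding info_upto_def by (rule sets_measure_of) auto
  also have "\<dots> \<subseteq> sets (GG M X k)"
    using sets.sigma_sets_subset[OF gen] by simp
  finally show ?thesis using measurable_mono[of borel borel "info_upto M Z k" "GG M X k"] assms(2) sp by auto
qed



lemma states_meas:
  fixes M :: "'a measure" and \<delta> dI v u S I R D :: "nat \<Rightarrow> 'a \<Rightarrow> real" and S0 I0 :: real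
  assumes causal: "\<And>k. u k \<in> borel_measurable
                   (info_upto M (\<lambda>j w. (S j w, I j w, R j w, D j w)) k)"
    and S_step: "\<And>k w. w \<in> space M \<Longrightarrow> S (Suc k) w = S k w - \<delta> k w * I k w"
    and I_step: "\<And>k w. w \<in> space M \<Longrightarrow>
                   I (Suc k) w = (1 + \<delta> k w) * I k w - v k w * u k w - dI k w * I k w"
    and R_step: "\<And>k w. w \<in> space M \<Longrightarrow> R (Suc k) w = R k w + v k w * u k w"
    and D_step: "\<And>k w. w \<in> space M \<Longrightarrow> D (Suc k) w = D k w + dI k w * I k w"
    and init: "\<And>w. w \<in> space M \<Longrightarrow> S 0 w = S0 \<and> I 0 w = I0 \<and> R 0 w = 0 \<and> D 0 w = 0"
  shows "S k \<in> borel_measurable (GG M (noise \<delta> dI v) k) \<and> I k \<in> borel_measurable (GG M (noise \<delta> dI v) k)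
    \<and> R k \<in> borel_measurable (GG M (noise \<delta> dI v) k) \<and> D k \<in> borel_measurable (GG M (noise \<delta> dI v) k)
    \<and> u k \<in> borel_measurable (GG M (noise \<delta> dI v) k)"
proof (induction k rule: less_induct)
  case (less k)
  let ?G = "GG M (noise \<delta> dI v)"
  have st: "S k \<in> borel_measurable (?G k) \<and> I k \<in> borel_measurable (?G k)
    \<and> R k \<in> borel_measurable (?G k) \<and> D k \<in> borel_measurable (?G k)"
  proof (cases k)
    case 0
    have "S 0 \<in> borel_measurable (?G 0)" by (subst measurable_cong[where g="\<lambda>_. S0"]) (auto simp: init)
    moreover have "I 0 \<in> borel_measurable (?G 0)" by (subst measurable_cong[where g="\<lambda>_. I0"]) (auto simp: init)
    moreover have "R 0 \<in> borel_measurable (?G 0)" by (subst measurable_cong[where g="\<lambda>_. 0"]) (auto simp: init)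
    moreover have "D 0 \<in> borel_measurable (?G 0)" by (subst measurable_cong[where g="\<lambda>_. 0"]) (auto simp: init)
    ultimately show ?thesis using 0 by simp
  next
    case (Suc m)
    then have IH: "S m \<in> borel_measurable (?G k) \<and> I m \<in> borel_measurable (?G k)
      \<and> R m \<in> borel_measurable (?G k) \<and> D m \<in> borel_measurable (?G k) \<and> u m \<in> borel_measurable (?G k)"
      using less[of m] GG_mono[of m k] by auto
    have n1: "\<delta> m \<in> borel_measurable (?G k)" using GG_noise[where i="Inl m" and k=k and M=M and X="noise \<delta> dI v"] Suc
      by (simp add: noise_def ntime_def)
    have n2: "dI m \<in> borel_measurable (?G k)" using GG_noise[where i="Inr (Inl m)" and k=k and M=M and X="noise \<delta> dI v"] Suc
      by (simp add: noise_def ntime_def)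
    have n3: "v m \<in> borel_measurable (?G k)" using GG_noise[where i="Inr (Inr m)" and k=k and M=M and X="noise \<delta> dI v"] Suc
      by (simp add: noise_def ntime_def)
    have "S k \<in> borel_measurable (?G k)"
      unfolding Suc by (subst measurable_cong[where g="\<lambda>w. S m w - \<delta> m w * I m w"]) (use IH n1 Suc S_step in auto)
    moreover have "I k \<in> borel_measurable (?G k)"
      unfolding Suc by (subst measurable_cong[where g="\<lambda>w. (1 + \<delta> m w) * I m w - v m w * u m w - dI m w * I m w"])
        (use IH n1 n2 n3 Suc I_step in auto)
    moreover have "R k \<in> borel_measurable (?G k)"
      unfolding Suc by (subst measurable_cong[where g="\<lambda>w. R m w + v m w * u m w"]) (use IH n3 Suc R_step in auto)
    moreover have "D k \<in> borel_measurable (?G k)"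
      unfolding Suc by (subst measurable_cong[where g="\<lambda>w. D m w + dI m w * I m w"]) (use IH n2 Suc D_step in auto)
    ultimately show ?thesis by simp
  qed
  have "u k \<in> borel_measurable (?G k)"
  proof (rule info_sub_GG[OF _ causal])
    fix j assume "j \<le> k"
    then have "S j \<in> borel_measurable (?G k) \<and> I j \<in> borel_measurable (?G k)
      \<and> R j \<in> borel_measurable (?G k) \<and> D j \<in> borel_measurable (?G k)"
    proof (cases "j = k")
      case False
      with \<open>j \<le> k\<close> show ?thesis using less[of j] GG_mono[of j k] by auto
    qed (use st in auto)
    then show "(\<lambda>w. (S j w, I j w, R j w, D j w)) \<in> borel_measurable (?G k)"
      by (intro borel_measurable_Pair) auto
  qed
  with st show ?case by simp
qed



lemma closed_form:
  assumes I_step: "\<And>k. I (Suc k) = (1 + \<delta> k w) * I k - v k w * u k w - dI k w * I k"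
    and I0: "I 0 = I0"
  shows "I k = PhiI \<delta> dI k 0 w * I0 - (\<Sum>i<k. PhiI \<delta> dI k (i + 1) w * v i w * u i w)"
proof (induction k)
  case 0
  then show ?case by (simp add: PhiI_def I0)
next
  case (Suc k)
  have P: "PhiI \<delta> dI (Suc k) j w = PhiI \<delta> dI k j w * (1 + \<delta> k w - dI k w)" if "j \<le> k" for j
    using that by (simp add: PhiI_def prod.atLeastLessThan_Suc)
  have P1: "PhiI \<delta> dI (Suc k) (Suc k) w = 1" by (simp add: PhiI_def)
  have "I (Suc k) = (1 + \<delta> k w - dI k w) * I k - v k w * u k w"
    using I_step[of k] by (simp add: algebra_simps)
  also have "\<dots> = (1 + \<delta> k w - dI k w) * (PhiI \<delta> dI k 0 w * I0 - (\<Sum>i<k. PhiI \<delta> dI k (i + 1) w * v i w * u i w))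
      - v k w * u k w" by (simp add: Suc)
  also have "\<dots> = PhiI \<delta> dI (Suc k) 0 w * I0 - ((\<Sum>i<k. PhiI \<delta> dI (Suc k) (i + 1) w * v i w * u i w)
      + PhiI \<delta> dI (Suc k) (Suc k) w * v k w * u k w)"
    by (simp add: P P1 sum_distrib_left right_diff_distrib algebra_simps)
  also have "\<dots> = PhiI \<delta> dI (Suc k) 0 w * I0 - (\<Sum>i<Suc k. PhiI \<delta> dI (Suc k) (i + 1) w * v i w * u i w)"
    by simp
  finally show ?case .
qed

theorem lemma2:
  fixes M :: "'a measure"
    and \<delta> dI v u S I R D :: "nat \<Rightarrow> 'a \<Rightarrow> real"
    and \<delta>max dmax vmin vmax \<delta>bar dbar S0 I0 :: real
  assumes prob: "prob_space M"
    and meas: "\<And>k. \<delta> k \<in> borel_measurable M" "\<And>k. dI k \<in> borel_measurable M"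
              "\<And>k. v k \<in> borel_measurable M"
    and indep: "prob_space.indep_vars M (\<lambda>_. borel) (noise \<delta> dI v) UNIV"
    and iid: "\<And>k. distr M borel (\<delta> k) = distr M borel (\<delta> 0)"
             "\<And>k. distr M borel (dI k) = distr M borel (dI 0)"
             "\<And>k. distr M borel (v k) = distr M borel (v 0)"
    and bd_\<delta>: "\<And>k w. w \<in> space M \<Longrightarrow> 0 \<le> \<delta> k w \<and> \<delta> k w \<le> \<delta>max"
    and bd_dI: "\<And>k w. w \<in> space M \<Longrightarrow> 0 \<le> dI k w \<and> dI k w \<le> dmax"
    and dmax1: "dmax < 1"
    and bd_v: "\<And>k w. w \<in> space M \<Longrightarrow> vmin \<le> v k w \<and> v k w \<le> vmax"
    and vpos: "0 < vmin" and vmax1: "vmax \<le> 1"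
    and \<delta>bar: "\<And>k. \<delta>bar = (\<integral>w. \<delta> k w \<partial>M)"
    and dbar: "\<And>k. dbar = (\<integral>w. dI k w \<partial>M)"
    and u_nonneg: "\<And>k w. w \<in> space M \<Longrightarrow> 0 \<le> u k w"
    and causal: "\<And>k. u k \<in> borel_measurable
                   (info_upto M (\<lambda>j w. (S j w, I j w, R j w, D j w)) k)"
    and S_step: "\<And>k w. w \<in> space M \<Longrightarrow> S (Suc k) w = S k w - \<delta> k w * I k w"
    and I_step: "\<And>k w. w \<in> space M \<Longrightarrow>
                   I (Suc k) w = (1 + \<delta> k w) * I k w - v k w * u k w - dI k w * I k w"
    and R_step: "\<And>k w. w \<in> space M \<Longrightarrow> R (Suc k) w = R k w + v k w * u k w"
    and D_step: "\<And>k w. w \<in> space M \<Longrightarrow> D (Suc k) w = D k w + dI k w * I k w"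
    and init: "\<And>w. w \<in> space M \<Longrightarrow> S 0 w = S0 \<and> I 0 w = I0 \<and> R 0 w = 0 \<and> D 0 w = 0"
    and I0pos: "0 < I0" and init_bd: "I0 * \<delta>max < S0"
    and nonneg: "AE w in M. \<forall>k. 0 \<le> S k w \<and> 0 \<le> I k w \<and> 0 \<le> R k w \<and> 0 \<le> D k w"
  shows "\<forall>k\<ge>1.
           (\<forall>w\<in>space M. I k w = PhiI \<delta> dI k 0 w * I0
                             - (\<Sum>i<k. PhiI \<delta> dI k (i + 1) w * v i w * u i w))
         \<and> (\<integral>w. I k w \<partial>M) \<le> (1 + \<delta>bar - dbar) ^ k * I0
              - vmin * (\<Sum>i<k. (1 + \<delta>bar - dbar) ^ (k - i - 1) * (\<integral>w. u i w \<partial>M))"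
proof -
  interpret prob_space M by (rule prob)
  let ?X = "noise \<delta> dI v"
  let ?G = "GG M ?X"
  define a where "a = 1 + \<delta>bar - dbar"
  define C where "C k = (1 + \<delta>max) ^ k * I0" for k
  have SM: "S k \<in> borel_measurable (?G k) \<and> I k \<in> borel_measurable (?G k)
    \<and> R k \<in> borel_measurable (?G k) \<and> D k \<in> borel_measurable (?G k)
    \<and> u k \<in> borel_measurable (?G k)" for k
    by (rule states_meas[OF causal S_step I_step R_step D_step init])
  have nm: "\<And>i. ?X i \<in> borel_measurable M" by (auto simp: noise_def meas split: sum.split)
  have Im: "\<And>k. I k \<in> borel_measurable M" using GG_sub_M[where X="?X" and M=M, OF nm] SM by blast
  have um: "\<And>k. u k \<in> borel_measurable M" using GG_sub_M[where X="?X" and M=M, OF nm] SM by blast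
  have \<delta>max0: "0 \<le> \<delta>max"
  proof -
    obtain w where "w \<in> space M" using not_empty by blast
    then show ?thesis using bd_\<delta>[of w 0] by auto
  qed
  have AEb: "AE w in M. \<forall>k. 0 \<le> I k w \<and> I k w \<le> C k \<and> 0 \<le> u k w \<and> u k w \<le> C (Suc k) / vmin"
    using nonneg AE_space
  proof eventually_elim
    case (elim w)
    have Ik: "I k w \<le> C k" for k
    proof (induction k)
      case 0
      then show ?case using init[OF elim(2)] by (simp add: C_def)
    next
      case (Suc k)
      have "0 \<le> v k w * u k w" using bd_v[OF elim(2), of k] vpos u_nonneg[OF elim(2), of k] by simp
      moreover have "0 \<le> dI k w * I k w" using bd_dI[OF elim(2), of k] elim(1) by simp
      moreover have "\<delta> k w * I k w \<le> \<delta>max * I k w"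
        using bd_\<delta>[OF elim(2), of k] elim(1) by (intro mult_right_mono) auto
      moreover have "(1 + \<delta>max) * I k w \<le> (1 + \<delta>max) * C k"
        using Suc \<delta>max0 by (intro mult_left_mono) auto
      ultimately show ?case using I_step[OF elim(2), of k] by (simp add: C_def algebra_simps)
    qed
    have uk: "u k w \<le> C (Suc k) / vmin" for k
    proof -
      have "0 \<le> dI k w * I k w" using bd_dI[OF elim(2), of k] elim(1) by simp
      moreover have "\<delta> k w * I k w \<le> \<delta>max * I k w"
        using bd_\<delta>[OF elim(2), of k] elim(1) by (intro mult_right_mono) auto
      moreover have "(1 + \<delta>max) * I k w \<le> (1 + \<delta>max) * C k"
        using Ik[of k] \<delta>max0 by (intro mult_left_mono) auto
      moreover have "0 \<le> I (Suc k) w" using elim(1) by simp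
      ultimately have "v k w * u k w \<le> C (Suc k)" using I_step[OF elim(2), of k] by (simp add: C_def algebra_simps)
      moreover have "vmin * u k w \<le> v k w * u k w"
        using bd_v[OF elim(2), of k] u_nonneg[OF elim(2), of k] by (intro mult_right_mono) auto
      ultimately show ?thesis using vpos by (simp add: pos_le_divide_eq mult.commute)
    qed
    show ?case using Ik uk elim(1) u_nonneg[OF elim(2)] by simp
  qed
  have intI: "integrable M (I k)" for k
    by (rule integrable_const_bound[where B="C k"]) (use AEb Im in \<open>auto elim!: eventually_mono\<close>)
  have intu: "integrable M (u k)" for k
    by (rule integrable_const_bound[where B="C (Suc k) / vmin"]) (use AEb um in \<open>auto elim!: eventually_mono\<close>)
  have int\<delta>: "integrable M (\<delta> k)" for k
    by (rule integrable_const_bound[where B="\<delta>max"]) (use bd_\<delta> meas in \<open>auto intro!: AE_I2\<close>)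
  have intd: "integrable M (dI k)" for k
    by (rule integrable_const_bound[where B="dmax"]) (use bd_dI meas in \<open>auto intro!: AE_I2\<close>)
  have intv: "integrable M (v k)" for k
  proof (rule integrable_const_bound[where B="vmax"])
    show "AE x in M. norm (v k x) \<le> vmax"
      using bd_v vpos by (intro AE_I2) (smt (verit) real_norm_def)
  qed (use meas in auto)
  have indX: "indep_var borel (?X j) borel Y" if "ntime j = k" "Y \<in> borel_measurable (?G k)" for j k Y
    by (rule indep_group[OF prob indep, of j "{i. ntime i < k}"]) (use that in \<open>auto simp: GG_def\<close>)
  have ind1: "indep_var borel (\<delta> k) borel Y" if "Y \<in> borel_measurable (?G k)" for k Y
    using indX[of "Inl k" k Y] that by (simp add: ntime_def noise_def)
  have ind2: "indep_var borel (dI k) borel Y" if "Y \<in> borel_measurable (?G k)" for k Y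
    using indX[of "Inr (Inl k)" k Y] that by (simp add: ntime_def noise_def)
  have ind3: "indep_var borel (v k) borel Y" if "Y \<in> borel_measurable (?G k)" for k Y
    using indX[of "Inr (Inr k)" k Y] that by (simp add: ntime_def noise_def)
  have a0: "0 \<le> a"
  proof -
    have "0 \<le> \<delta>bar" unfolding \<delta>bar[of 0] by (rule integral_nonneg_AE) (use bd_\<delta> in \<open>auto intro!: AE_I2\<close>)
    moreover have "dbar \<le> dmax" unfolding dbar[of 0] by (rule integral_le_const) (use bd_dI intd in \<open>auto intro!: AE_I2\<close>)
    ultimately show ?thesis using dmax1 by (simp add: a_def)
  qed
  have Ev: "vmin \<le> (\<integral>w. v k w \<partial>M)" for k
    by (rule integral_ge_const) (use bd_v intv in \<open>auto intro!: AE_I2\<close>)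
  have Eu: "0 \<le> (\<integral>w. u k w \<partial>M)" for k
    by (rule integral_nonneg_AE) (use u_nonneg in \<open>auto intro!: AE_I2\<close>)
  have rec: "(\<integral>w. I (Suc k) w \<partial>M) \<le> a * (\<integral>w. I k w \<partial>M) - vmin * (\<integral>w. u k w \<partial>M)" for k
  proof -
    have i1: "integrable M (\<lambda>w. \<delta> k w * I k w)"
      by (rule indep_var_integrable[OF ind1 int\<delta> intI]) (use SM in blast)
    have i2: "integrable M (\<lambda>w. dI k w * I k w)"
      by (rule indep_var_integrable[OF ind2 intd intI]) (use SM in blast)
    have i3: "integrable M (\<lambda>w. v k w * u k w)"
      by (rule indep_var_integrable[OF ind3 intv intu]) (use SM in blast)
    have e1: "(\<integral>w. \<delta> k w * I k w \<partial>M) = \<delta>bar * (\<integral>w. I k w \<partial>M)"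
      using indep_var_lebesgue_integral[OF ind1 int\<delta> intI] SM \<delta>bar[of k] by simp
    have e2: "(\<integral>w. dI k w * I k w \<partial>M) = dbar * (\<integral>w. I k w \<partial>M)"
      using indep_var_lebesgue_integral[OF ind2 intd intI] SM dbar[of k] by simp
    have e3: "(\<integral>w. v k w * u k w \<partial>M) = (\<integral>w. v k w \<partial>M) * (\<integral>w. u k w \<partial>M)"
      using indep_var_lebesgue_integral[OF ind3 intv intu] SM by simp
    have "(\<integral>w. I (Suc k) w \<partial>M) = (\<integral>w. I k w + \<delta> k w * I k w - dI k w * I k w - v k w * u k w \<partial>M)"
      by (rule Bochner_Integration.integral_cong[OF refl]) (auto simp: I_step algebra_simps)
    also have "\<dots> = (\<integral>w. I k w \<partial>M) + (\<integral>w. \<delta> k w * I k w \<partial>M) - (\<integral>w. dI k w * I k w \<partial>M) - (\<integral>w. v k w * u k w \<partial>M)"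
      using intI i1 i2 i3 by simp
    also have "\<dots> = a * (\<integral>w. I k w \<partial>M) - (\<integral>w. v k w \<partial>M) * (\<integral>w. u k w \<partial>M)"
      unfolding e1 e2 e3 by (simp add: a_def algebra_simps)
    also have "\<dots> \<le> a * (\<integral>w. I k w \<partial>M) - vmin * (\<integral>w. u k w \<partial>M)"
      using mult_right_mono[OF Ev Eu] by simp
    finally show ?thesis .
  qed
  have bound: "(\<integral>w. I k w \<partial>M) \<le> a ^ k * I0 - vmin * (\<Sum>i<k. a ^ (k - i - 1) * (\<integral>w. u i w \<partial>M))" for k
  proof (induction k)
    case 0
    have "(\<integral>w. I 0 w \<partial>M) = (\<integral>w. I0 \<partial>M)" by (rule Bochner_Integration.integral_cong[OF refl]) (auto simp: init)
    then show ?case by (simp add: prob_space)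
  next
    case (Suc k)
    have s: "(\<Sum>i<Suc k. a ^ (Suc k - i - 1) * (\<integral>w. u i w \<partial>M))
        = a * (\<Sum>i<k. a ^ (k - i - 1) * (\<integral>w. u i w \<partial>M)) + (\<integral>w. u k w \<partial>M)"
    proof -
      have "(\<Sum>i<k. a ^ (Suc k - i - 1) * (\<integral>w. u i w \<partial>M)) = (\<Sum>i<k. a * (a ^ (k - i - 1) * (\<integral>w. u i w \<partial>M)))"
        by (rule sum.cong) (auto simp: Suc_diff_Suc power_Suc[symmetric] simp del: power_Suc)
      then show ?thesis by (simp add: sum_distrib_left)
    qed
    have "(\<integral>w. I (Suc k) w \<partial>M) \<le> a * (\<integral>w. I k w \<partial>M) - vmin * (\<integral>w. u k w \<partial>M)" by (rule rec)
    also have "\<dots> \<le> a * (a ^ k * I0 - vmin * (\<Sum>i<k. a ^ (k - i - 1) * (\<integral>w. u i w \<partial>M))) - vmin * (\<integral>w. u k w \<partial>M)"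
      using mult_left_mono[OF Suc a0] by simp
    also have "\<dots> = a ^ Suc k * I0 - vmin * (\<Sum>i<Suc k. a ^ (Suc k - i - 1) * (\<integral>w. u i w \<partial>M))"
      unfolding s by (simp add: algebra_simps)
    finally show ?case .
  qed
  have cf: "I k w = PhiI \<delta> dI k 0 w * I0 - (\<Sum>i<k. PhiI \<delta> dI k (i + 1) w * v i w * u i w)"
    if "w \<in> space M" for k w
    by (rule closed_form[where I="\<lambda>k. I k w"]) (use that I_step init in auto)
  show ?thesis using cf bound by (simp add: a_def)
qed

end
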